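(* Let $(X,\sigma,\tau)$ be a full, separable, chronologically dense Lorentzian metric space satisfying the S-property, and let $x,y\in X$. Then $\mathbf{i}(x)\leq_{\overline{\tau}}\mathbf{i}(y)$ if and only if $y\in\overline{J^+(x)}$ and $x\in\overline{J^-(y)}$ (closures in $\sigma$).
   Context: A Lorentzian metric space $(X,\sigma,\tau)$ is a topological space with $\tau:X\times X\to[0,\infty]$ lower semicontinuous and satisfying $\tau(x,z)\geq\tau(x,y)+\tau(y,z)$ whenever $\tau(x,y),\tau(y,z)>0$. Write $x\ll y$ iff $\tau(x,y)>0$, $I^+(x)=\{y:x\ll y\}$, $I^-(x)=\{y:y\ll x\}$, $I^\pm[A]=\bigcup_{a\in A}I^\pm(a)$. Full: $I^\pm(x)\neq\emptyset$ for all $x$. Future (resp. past) chain: $x_n\ll x_{n+1}$ (resp. $x_{n+1}\ll x_n$). Separable: there is a countable $S$ with $x\ll y\Rightarrow\exists s\in S$, $x\ll s\ll y$. Chronologically dense: every $x$ with $I^-(x)\neq\emptyset$ (resp. $I^+(x)\neq\emptyset$) is the $\sigma$-limit of a future (resp. past) chain. Define $x\leq_\tau y$ iff $I^-(x)\subset I^-(y)$ and $I^+(y)\subset I^+(x)$, and $J^+(x)=\{y:x\leq_\tau y\}$, $J^-(y)=\{x:x\leq_\tau y\}$. Past set: $P=I^-[P]$; $\downarrow S=I^-[\{p:p\ll q\ \forall q\in S\}]$; IP: past set not the union of two proper past subsets; PIP: IP of the form $I^-(p)$; future sets, $\uparrow S$, IF, PIF dually. For nonempty IP $P$ and IF $F$,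 $P\sim_S F$ iff $P$ is a maximal IP in $\downarrow F$ and $F$ a maximal IF in $\uparrow P$; $P\sim_S\emptyset$ (resp. $\emptyset\sim_S F$) if the nonempty $P$ (resp. $F$) is S-related to no nonempty IF (resp. IP). S-property: for every $x$, $I^-(x)\sim_S I^+(x)$, and no other PIF (resp. PIP) is S-related to $I^-(x)$ (resp. $I^+(x)$). c-completion $\overline X=\{(P,F):P\sim_S F\}$, $\mathbf{i}(x)=(I^-(x),I^+(x))$. $\overline\tau((P,F),(P',F'))=0$ if $F=\emptyset$ or $P'=\emptyset$, otherwise $\lim_n\tau(q_n,p'_n)$ for a past chain $\{q_n\}$ with $I^+[\{q_n\}]=F$ and future chain $\{p'_n\}$ with $I^-[\{p'_n\}]=P'$. $a\,\overline\ll\,b$ iff $\overline\tau(a,b)>0$; with $\overline I^\pm$ the corresponding futures/pasts in $\overline X$, $a\leq_{\overline\tau}b$ iff $\overline I^-(a)\subset\overline I^-(b)$ and $\overline I^+(b)\subset\overline I^+(a)$. *)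

theory Defs
  imports "HOL-Analysis.Analysis" "HOL-Library.Extended_Nonnegative_Real"
begin

text \<open>A Lorentzian metric space: the topology sigma is the type-class topology of 'a,
  the time separation is tau :: 'a => 'a => ennreal (values in [0,infinity]).\<close>

definition lsc_tau :: "('a::topological_space \<Rightarrow> 'a \<Rightarrow> ennreal) \<Rightarrow> bool" where
  "lsc_tau \<tau> \<longleftrightarrow> (\<forall>c. open {p :: 'a \<times> 'a. c < \<tau> (fst p) (snd p)})"

definition lorentzian_metric_space :: "('a::topological_space \<Rightarrow> 'a \<Rightarrow> ennreal) \<Rightarrow> bool" where
  "lorentzian_metric_space \<tau> \<longleftrightarrow> lsc_tau \<tau> \<and>
     (\<forall>x y z. \<tau> x y > 0 \<and> \<tau> y z > 0 \<longrightarrow> \<tau> x z \<ge> \<tau> x y + \<tau> y z)"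

definition chr :: "('a \<Rightarrow> 'a \<Rightarrow> ennreal) \<Rightarrow> 'a \<Rightarrow> 'a \<Rightarrow> bool" where
  "chr \<tau> x y \<longleftrightarrow> \<tau> x y > 0"

definition Ip :: "('a \<Rightarrow> 'a \<Rightarrow> ennreal) \<Rightarrow> 'a \<Rightarrow> 'a set" where
  "Ip \<tau> x = {y. chr \<tau> x y}"

definition Im :: "('a \<Rightarrow> 'a \<Rightarrow> ennreal) \<Rightarrow> 'a \<Rightarrow> 'a set" where
  "Im \<tau> x = {y. chr \<tau> y x}"

definition IpS :: "('a \<Rightarrow> 'a \<Rightarrow> ennreal) \<Rightarrow> 'a set \<Rightarrow> 'a set" where
  "IpS \<tau> A = (\<Union>a\<in>A. Ip \<tau> a)"

definition ImS :: "('a \<Rightarrow> 'a \<Rightarrow> ennreal) \<Rightarrow> 'a set \<Rightarrow> 'a set" where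
  "ImS \<tau> A = (\<Union>a\<in>A. Im \<tau> a)"

definition full :: "('a \<Rightarrow> 'a \<Rightarrow> ennreal) \<Rightarrow> bool" where
  "full \<tau> \<longleftrightarrow> (\<forall>x. Ip \<tau> x \<noteq> {} \<and> Im \<tau> x \<noteq> {})"

definition future_chain :: "('a \<Rightarrow> 'a \<Rightarrow> ennreal) \<Rightarrow> (nat \<Rightarrow> 'a) \<Rightarrow> bool" where
  "future_chain \<tau> p \<longleftrightarrow> (\<forall>n. chr \<tau> (p n) (p (Suc n)))"

definition past_chain :: "('a \<Rightarrow> 'a \<Rightarrow> ennreal) \<Rightarrow> (nat \<Rightarrow> 'a) \<Rightarrow> bool" where
  "past_chain \<tau> p \<longleftrightarrow> (\<forall>n. chr \<tau> (p (Suc n)) (p n))"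

definition separable_lms :: "('a \<Rightarrow> 'a \<Rightarrow> ennreal) \<Rightarrow> bool" where
  "separable_lms \<tau> \<longleftrightarrow> (\<exists>S. countable S \<and>
     (\<forall>x y. chr \<tau> x y \<longrightarrow> (\<exists>s\<in>S. chr \<tau> x s \<and> chr \<tau> s y)))"

definition chron_dense :: "('a::topological_space \<Rightarrow> 'a \<Rightarrow> ennreal) \<Rightarrow> bool" where
  "chron_dense \<tau> \<longleftrightarrow>
     (\<forall>x. Im \<tau> x \<noteq> {} \<longrightarrow> (\<exists>p. future_chain \<tau> p \<and> p \<longlonglongrightarrow> x)) \<and>
     (\<forall>x. Ip \<tau> x \<noteq> {} \<longrightarrow> (\<exists>p. past_chain \<tau> p \<and> p \<longlonglongrightarrow> x))"

definition leq_tau :: "('a \<Rightarrow> 'a \<Rightarrow> ennreal) \<Rightarrow> 'a \<Rightarrow> 'a \<Rightarrow> bool" where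
  "leq_tau \<tau> x y \<longleftrightarrow> Im \<tau> x \<subseteq> Im \<tau> y \<and> Ip \<tau> y \<subseteq> Ip \<tau> x"

definition Jp :: "('a \<Rightarrow> 'a \<Rightarrow> ennreal) \<Rightarrow> 'a \<Rightarrow> 'a set" where
  "Jp \<tau> x = {y. leq_tau \<tau> x y}"

definition Jm :: "('a \<Rightarrow> 'a \<Rightarrow> ennreal) \<Rightarrow> 'a \<Rightarrow> 'a set" where
  "Jm \<tau> y = {x. leq_tau \<tau> x y}"

definition past_set :: "('a \<Rightarrow> 'a \<Rightarrow> ennreal) \<Rightarrow> 'a set \<Rightarrow> bool" where
  "past_set \<tau> P \<longleftrightarrow> P = ImS \<tau> P"

definition future_set :: "('a \<Rightarrow> 'a \<Rightarrow> ennreal) \<Rightarrow> 'a set \<Rightarrow> bool" where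
  "future_set \<tau> F \<longleftrightarrow> F = IpS \<tau> F"

definition IP :: "('a \<Rightarrow> 'a \<Rightarrow> ennreal) \<Rightarrow> 'a set \<Rightarrow> bool" where
  "IP \<tau> P \<longleftrightarrow> P \<noteq> {} \<and> past_set \<tau> P \<and>
     \<not> (\<exists>A B. past_set \<tau> A \<and> past_set \<tau> B \<and> A \<subset> P \<and> B \<subset> P \<and> P = A \<union> B)"

definition IF :: "('a \<Rightarrow> 'a \<Rightarrow> ennreal) \<Rightarrow> 'a set \<Rightarrow> bool" where
  "IF \<tau> F \<longleftrightarrow> F \<noteq> {} \<and> future_set \<tau> F \<and>
     \<not> (\<exists>A B. future_set \<tau> A \<and> future_set \<tau> B \<and> A \<subset> F \<and> B \<subset> F \<and> F = A \<union> B)"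

definition down :: "('a \<Rightarrow> 'a \<Rightarrow> ennreal) \<Rightarrow> 'a set \<Rightarrow> 'a set" where
  "down \<tau> S = ImS \<tau> {p. \<forall>q\<in>S. chr \<tau> p q}"

definition up :: "('a \<Rightarrow> 'a \<Rightarrow> ennreal) \<Rightarrow> 'a set \<Rightarrow> 'a set" where
  "up \<tau> S = IpS \<tau> {p. \<forall>q\<in>S. chr \<tau> q p}"

definition maximal_IP_in :: "('a \<Rightarrow> 'a \<Rightarrow> ennreal) \<Rightarrow> 'a set \<Rightarrow> 'a set \<Rightarrow> bool" where
  "maximal_IP_in \<tau> P A \<longleftrightarrow> IP \<tau> P \<and> P \<subseteq> A \<and> \<not> (\<exists>P'. IP \<tau> P' \<and> P \<subset> P' \<and> P' \<subseteq> A)"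

definition maximal_IF_in :: "('a \<Rightarrow> 'a \<Rightarrow> ennreal) \<Rightarrow> 'a set \<Rightarrow> 'a set \<Rightarrow> bool" where
  "maximal_IF_in \<tau> F A \<longleftrightarrow> IF \<tau> F \<and> F \<subseteq> A \<and> \<not> (\<exists>F'. IF \<tau> F' \<and> F \<subset> F' \<and> F' \<subseteq> A)"

definition S_rel_ne :: "('a \<Rightarrow> 'a \<Rightarrow> ennreal) \<Rightarrow> 'a set \<Rightarrow> 'a set \<Rightarrow> bool" where
  "S_rel_ne \<tau> P F \<longleftrightarrow> IP \<tau> P \<and> IF \<tau> F \<and>
     maximal_IP_in \<tau> P (down \<tau> F) \<and> maximal_IF_in \<tau> F (up \<tau> P)"

definition S_rel :: "('a \<Rightarrow> 'a \<Rightarrow> ennreal) \<Rightarrow> 'a set \<Rightarrow> 'a set \<Rightarrow> bool" where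
  "S_rel \<tau> P F \<longleftrightarrow>
     (P \<noteq> {} \<and> F \<noteq> {} \<and> S_rel_ne \<tau> P F) \<or>
     (IP \<tau> P \<and> F = {} \<and> \<not> (\<exists>F'. F' \<noteq> {} \<and> S_rel_ne \<tau> P F')) \<or>
     (P = {} \<and> IF \<tau> F \<and> \<not> (\<exists>P'. P' \<noteq> {} \<and> S_rel_ne \<tau> P' F))"

definition S_property :: "('a \<Rightarrow> 'a \<Rightarrow> ennreal) \<Rightarrow> bool" where
  "S_property \<tau> \<longleftrightarrow> (\<forall>x.
     S_rel \<tau> (Im \<tau> x) (Ip \<tau> x) \<and>
     (\<forall>z. IF \<tau> (Ip \<tau> z) \<and> S_rel \<tau> (Im \<tau> x) (Ip \<tau> z) \<longrightarrow> Ip \<tau> z = Ip \<tau> x) \<and>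
     (\<forall>z. IP \<tau> (Im \<tau> z) \<and> S_rel \<tau> (Im \<tau> z) (Ip \<tau> x) \<longrightarrow> Im \<tau> z = Im \<tau> x))"

definition c_completion :: "('a \<Rightarrow> 'a \<Rightarrow> ennreal) \<Rightarrow> ('a set \<times> 'a set) set" where
  "c_completion \<tau> = {(P, F). S_rel \<tau> P F}"

definition iemb :: "('a \<Rightarrow> 'a \<Rightarrow> ennreal) \<Rightarrow> 'a \<Rightarrow> 'a set \<times> 'a set" where
  "iemb \<tau> x = (Im \<tau> x, Ip \<tau> x)"

text \<open>Extended time separation: limit along a past chain generating F and a future chain
  generating P' (chosen by Hilbert choice; independence of the choice is part of the theory).\<close>
definition tau_bar :: "('a::topological_space \<Rightarrow> 'a \<Rightarrow> ennreal) \<Rightarrow>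
    'a set \<times> 'a set \<Rightarrow> 'a set \<times> 'a set \<Rightarrow> ennreal" where
  "tau_bar \<tau> a b =
    (if snd a = {} \<or> fst b = {} then 0
     else (let q = (SOME q. past_chain \<tau> q \<and> IpS \<tau> (range q) = snd a);
               p = (SOME p. future_chain \<tau> p \<and> ImS \<tau> (range p) = fst b)
           in lim (\<lambda>n. \<tau> (q n) (p n))))"

definition Ip_bar :: "('a::topological_space \<Rightarrow> 'a \<Rightarrow> ennreal) \<Rightarrow> 'a set \<times> 'a set \<Rightarrow> ('a set \<times> 'a set) set" where
  "Ip_bar \<tau> a = {b \<in> c_completion \<tau>. tau_bar \<tau> a b > 0}"

definition Im_bar :: "('a::topological_space \<Rightarrow> 'a \<Rightarrow> ennreal) \<Rightarrow> 'a set \<times> 'a set \<Rightarrow> ('a set \<times> 'a set) set" where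
  "Im_bar \<tau> a = {b \<in> c_completion \<tau>. tau_bar \<tau> b a > 0}"

definition leq_tau_bar :: "('a::topological_space \<Rightarrow> 'a \<Rightarrow> ennreal) \<Rightarrow> 'a set \<times> 'a set \<Rightarrow> 'a set \<times> 'a set \<Rightarrow> bool" where
  "leq_tau_bar \<tau> a b \<longleftrightarrow> Im_bar \<tau> a \<subseteq> Im_bar \<tau> b \<and> Ip_bar \<tau> b \<subseteq> Ip_bar \<tau> a"

end

theory Submission
  imports Defs
begin

definition tri :: "('a \<Rightarrow> 'a \<Rightarrow> ennreal) \<Rightarrow> bool" where
  "tri \<tau> \<longleftrightarrow> (\<forall>x y z. \<tau> x y > 0 \<and> \<tau> y z > 0 \<longrightarrow> \<tau> x z \<ge> \<tau> x y + \<tau> y z)"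

lemma chr_trans:
  assumes "tri \<tau>" "chr \<tau> x y" "chr \<tau> y z" shows "chr \<tau> x z"
proof -
  have "\<tau> x z \<ge> \<tau> x y + \<tau> y z" using assms unfolding tri_def chr_def by blast
  moreover have "\<tau> x y + \<tau> y z \<ge> \<tau> x y" by simp
  ultimately show ?thesis using assms(2) unfolding chr_def by order
qed

lemma IpS_future:
  assumes "tri \<tau>" "separable_lms \<tau>" shows "future_set \<tau> (IpS \<tau> A)"
  unfolding future_set_def
proof
  show "IpS \<tau> A \<subseteq> IpS \<tau> (IpS \<tau> A)"
  proof
    fix z assume "z \<in> IpS \<tau> A"
    then obtain a where a: "a \<in> A" "chr \<tau> a z" by (auto simp: IpS_def Ip_def)
    then obtain s where "chr \<tau> a s" "chr \<tau> s z" using assms(2) unfolding separable_lms_def by blast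
    then show "z \<in> IpS \<tau> (IpS \<tau> A)" using a by (auto simp: IpS_def Ip_def)
  qed
  show "IpS \<tau> (IpS \<tau> A) \<subseteq> IpS \<tau> A"
    using chr_trans[OF assms(1)] by (auto simp: IpS_def Ip_def)
qed

lemma IF_directed:
  assumes "tri \<tau>" "separable_lms \<tau>" "IF \<tau> F" "a \<in> F" "b \<in> F"
  shows "\<exists>c\<in>F. chr \<tau> c a \<and> chr \<tau> c b"
proof (rule ccontr)
  assume nc: "\<not> ?thesis"
  define A where "A = IpS \<tau> (F \<inter> Im \<tau> a)"
  define B where "B = IpS \<tau> (F - Im \<tau> a)"
  have FF: "F = IpS \<tau> F" using assms(3) unfolding IF_def future_set_def by blast
  have "F = A \<union> B" unfolding A_def B_def IpS_def
    using FF unfolding IpS_def by blast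
  moreover have "A \<subseteq> F" "B \<subseteq> F" unfolding A_def B_def using FF unfolding IpS_def by blast+
  moreover have "b \<notin> A" using nc unfolding A_def IpS_def Ip_def Im_def by blast
  moreover have "a \<notin> B" unfolding B_def IpS_def Ip_def Im_def by blast
  moreover have "future_set \<tau> A" "future_set \<tau> B"
    unfolding A_def B_def using IpS_future[OF assms(1,2)] by blast+
  ultimately show False using assms(3-5) unfolding IF_def by blast
qed

lemma IF_chain:
  assumes "tri \<tau>" "separable_lms \<tau>" "IF \<tau> F"
  shows "\<exists>q. past_chain \<tau> q \<and> IpS \<tau> (range q) = F"
proof -
  obtain S where S: "countable S" "\<And>x y. chr \<tau> x y \<Longrightarrow> \<exists>s\<in>S. chr \<tau> x s \<and> chr \<tau> s y"
    using assms(2) unfolding separable_lms_def by blast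
  have FF: "F = IpS \<tau> F" using assms(3) unfolding IF_def future_set_def by blast
  have memF: "s \<in> F" if "w \<in> F" "chr \<tau> w s" for w s
  proof -
    have "s \<in> IpS \<tau> F" using that unfolding IpS_def Ip_def by blast
    then show ?thesis using FF by simp
  qed
  have key: "\<exists>s\<in>S \<inter> F. chr \<tau> s z" if "z \<in> F" for z
  proof -
    have "z \<in> IpS \<tau> F" using that FF by simp
    then obtain w where "w \<in> F" "chr \<tau> w z" unfolding IpS_def Ip_def by blast
    then obtain s where "s \<in> S" "chr \<tau> w s" "chr \<tau> s z" using S(2) by blast
    then show ?thesis using memF \<open>w \<in> F\<close> by blast
  qed
  obtain f where "f \<in> F" using assms(3) unfolding IF_def by blast
  then have Tne: "S \<inter> F \<noteq> {}" using key by blast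
  define e where "e = from_nat_into (S \<inter> F)"
  have eT: "e n \<in> S \<inter> F" for n unfolding e_def using from_nat_into[OF Tne] .
  have rng: "range e = S \<inter> F" unfolding e_def
    using range_from_nat_into[OF Tne] countable_subset[OF _ S(1), of "S \<inter> F"] by blast
  define q where "q = rec_nat (e 0) (\<lambda>n c. SOME c'. c' \<in> F \<and> chr \<tau> c' c \<and> chr \<tau> c' (e n))"
  have q0: "q 0 = e 0" unfolding q_def by simp
  have qS: "q (Suc n) = (SOME c'. c' \<in> F \<and> chr \<tau> c' (q n) \<and> chr \<tau> c' (e n))" for n
    unfolding q_def by simp
  have qF: "q n \<in> F \<and> (\<forall>m. n = Suc m \<longrightarrow> chr \<tau> (q n) (q m) \<and> chr \<tau> (q n) (e m))" for n
  proof (induction n)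
    case 0 then show ?case using q0 eT by simp
  next
    case (Suc n)
    have "\<exists>c'. c' \<in> F \<and> chr \<tau> c' (q n) \<and> chr \<tau> c' (e n)"
      using IF_directed[OF assms(1,2,3), of "q n" "e n"] Suc.IH eT by blast
    from someI_ex[OF this] show ?case using qS by simp
  qed
  have qF1: "q n \<in> F" for n using qF by simp
  have qF2: "chr \<tau> (q (Suc n)) (q n)" "chr \<tau> (q (Suc n)) (e n)" for n using qF[of "Suc n"] by simp_all
  have "past_chain \<tau> q" unfolding past_chain_def using qF2 by simp
  moreover have "IpS \<tau> (range q) = F"
  proof
    show "IpS \<tau> (range q) \<subseteq> F"
    proof
      fix z assume "z \<in> IpS \<tau> (range q)"
      then obtain n where "chr \<tau> (q n) z" unfolding IpS_def Ip_def by blast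
      then show "z \<in> F" by (rule memF[OF qF1])
    qed
    show "F \<subseteq> IpS \<tau> (range q)"
    proof
      fix z assume "z \<in> F"
      then obtain s where "s \<in> S \<inter> F" "chr \<tau> s z" using key by blast
      then obtain n where "s = e n" using rng by blast
      then have "chr \<tau> (q (Suc n)) z" using chr_trans[OF assms(1) qF2(2)] \<open>chr \<tau> s z\<close> by simp
      then show "z \<in> IpS \<tau> (range q)" unfolding IpS_def Ip_def by blast
    qed
  qed
  ultimately show ?thesis by blast
qed

definition flip :: "('a \<Rightarrow> 'a \<Rightarrow> ennreal) \<Rightarrow> ('a \<Rightarrow> 'a \<Rightarrow> ennreal)" where
  "flip \<tau> = (\<lambda>x y. \<tau> y x)"

lemma flip_tri: "tri \<tau> \<Longrightarrow> tri (flip \<tau>)"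
  unfolding tri_def flip_def by (metis add.commute)

lemma flip_sep: "separable_lms \<tau> \<Longrightarrow> separable_lms (flip \<tau>)"
  unfolding separable_lms_def flip_def chr_def by metis

lemma flip_chr: "chr (flip \<tau>) x y = chr \<tau> y x" unfolding flip_def chr_def by simp
lemma flip_Ip: "Ip (flip \<tau>) = Im \<tau>" unfolding Ip_def Im_def flip_chr by simp
lemma flip_IpS: "IpS (flip \<tau>) = ImS \<tau>" unfolding IpS_def ImS_def flip_Ip by simp
lemma flip_IF: "IF (flip \<tau>) = IP \<tau>"
  unfolding IF_def IP_def future_set_def past_set_def flip_IpS by simp
lemma flip_pc: "past_chain (flip \<tau>) = future_chain \<tau>"
  unfolding past_chain_def future_chain_def flip_chr by simp

lemma IP_chain:
  assumes "tri \<tau>" "separable_lms \<tau>" "IP \<tau> P"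
  shows "\<exists>p. future_chain \<tau> p \<and> ImS \<tau> (range p) = P"
  using IF_chain[OF flip_tri[OF assms(1)] flip_sep[OF assms(2)]] assms(3)
  unfolding flip_IF flip_pc flip_IpS by blast


lemma pc_mono:
  assumes "tri \<tau>" "past_chain \<tau> q" "k \<le> n" "chr \<tau> (q k) z" shows "chr \<tau> (q n) z"
  using assms(3)
proof (induction n)
  case 0 then show ?case using assms(4) by simp
next
  case (Suc n)
  show ?case
  proof (cases "k = Suc n")
    case True then show ?thesis using assms(4) by simp
  next
    case False
    then have "chr \<tau> (q n) z" using Suc by simp
    moreover have "chr \<tau> (q (Suc n)) (q n)" using assms(2) unfolding past_chain_def by simp
    ultimately show ?thesis using chr_trans[OF assms(1)] by blast
  qed
qed

lemma fc_mono:
  assumes "tri \<tau>" "future_chain \<tau> p" "m \<le> n" "chr \<tau> z (p m)" shows "chr \<tau> z (p n)"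
  using assms(3)
proof (induction n)
  case 0 then show ?case using assms(4) by simp
next
  case (Suc n)
  show ?case
  proof (cases "m = Suc n")
    case True then show ?thesis using assms(4) by simp
  next
    case False
    then have "chr \<tau> z (p n)" using Suc by simp
    moreover have "chr \<tau> (p n) (p (Suc n))" using assms(2) unfolding future_chain_def by simp
    ultimately show ?thesis using chr_trans[OF assms(1)] by blast
  qed
qed

lemma tau_bar_pos:
  fixes \<tau> :: "'a::topological_space \<Rightarrow> 'a \<Rightarrow> ennreal"
  assumes T: "tri \<tau>" and Sp: "separable_lms \<tau>" and ne: "snd a \<noteq> {}" "fst b \<noteq> {}"
    and F: "IF \<tau> (snd a)" and P: "IP \<tau> (fst b)"
  shows "tau_bar \<tau> a b > 0 \<longleftrightarrow> snd a \<inter> fst b \<noteq> {}"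
proof -
  define q where "q = (SOME q. past_chain \<tau> q \<and> IpS \<tau> (range q) = snd a)"
  define p where "p = (SOME p. future_chain \<tau> p \<and> ImS \<tau> (range p) = fst b)"
  have q: "past_chain \<tau> q \<and> IpS \<tau> (range q) = snd a"
    unfolding q_def by (rule someI_ex[OF IF_chain[OF T Sp F]])
  have p: "future_chain \<tau> p \<and> ImS \<tau> (range p) = fst b"
    unfolding p_def by (rule someI_ex[OF IP_chain[OF T Sp P]])
  define f where "f = (\<lambda>n. \<tau> (q n) (p n))"
  have tb: "tau_bar \<tau> a b = lim f"
    unfolding tau_bar_def f_def q_def p_def using ne by (simp add: Let_def)
  have inc: "incseq f"
  proof (rule incseq_SucI)
    fix n
    show "f n \<le> f (Suc n)"
    proof (cases "f n > 0")
      case False then show ?thesis by simp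
    next
      case True
      have c1: "\<tau> (q (Suc n)) (q n) > 0" using q unfolding past_chain_def chr_def by simp
      have c2: "\<tau> (p n) (p (Suc n)) > 0" using p unfolding future_chain_def chr_def by simp
      have "\<tau> (q n) (p (Suc n)) \<ge> \<tau> (q n) (p n) + \<tau> (p n) (p (Suc n))"
        using T True c2 unfolding tri_def f_def by blast
      then have d1: "\<tau> (q n) (p (Suc n)) \<ge> f n" unfolding f_def
        by (meson add_increasing2 order_trans zero_le le_iff_add order_refl)
      then have "\<tau> (q n) (p (Suc n)) > 0" using True by order
      then have "\<tau> (q (Suc n)) (p (Suc n)) \<ge> \<tau> (q (Suc n)) (q n) + \<tau> (q n) (p (Suc n))"
        using T c1 unfolding tri_def by blast
      moreover have "\<tau> (q (Suc n)) (q n) + \<tau> (q n) (p (Suc n)) \<ge> \<tau> (q n) (p (Suc n))"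
        by simp
      ultimately show ?thesis using d1 unfolding f_def by order
    qed
  qed
  have "lim f = (SUP n. f n)" using LIMSEQ_SUP[OF inc] by (rule limI)
  then have "tau_bar \<tau> a b > 0 \<longleftrightarrow> (\<exists>n. f n > 0)" using tb by (simp add: less_SUP_iff)
  also have "\<dots> \<longleftrightarrow> snd a \<inter> fst b \<noteq> {}"
  proof
    assume "\<exists>n. f n > 0"
    then obtain n where "chr \<tau> (q n) (p n)" unfolding f_def chr_def by blast
    moreover have "chr \<tau> (p n) (p (Suc n))" using p unfolding future_chain_def by simp
    ultimately have "p n \<in> snd a" "p n \<in> fst b" using p q unfolding IpS_def ImS_def Ip_def Im_def
      by blast+
    then show "snd a \<inter> fst b \<noteq> {}" by blast
  next
    assume "snd a \<inter> fst b \<noteq> {}"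
    then obtain z where z: "z \<in> snd a" "z \<in> fst b" by blast
    have "z \<in> IpS \<tau> (range q)" using z q by simp
    then obtain k where k: "chr \<tau> (q k) z" unfolding IpS_def Ip_def by blast
    have "z \<in> ImS \<tau> (range p)" using z p by simp
    then obtain m where m: "chr \<tau> z (p m)" unfolding ImS_def Im_def by blast
    have "chr \<tau> (q (max k m)) z" using pc_mono[OF T, where q=q and k=k and n="max k m"] k q by simp
    moreover have "chr \<tau> z (p (max k m))" using fc_mono[OF T, where p=p and m=m and n="max k m"] m p by simp
    ultimately have "chr \<tau> (q (max k m)) (p (max k m))" using chr_trans[OF T] by blast
    then show "\<exists>n. f n > 0" unfolding f_def chr_def by blast
  qed
  finally show ?thesis .
qed


lemma compl_mem: "b \<in> c_completion \<tau> \<longleftrightarrow> S_rel \<tau> (fst b) (snd b)"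
  unfolding c_completion_def by (cases b) simp

lemma compl_snd: "S_rel \<tau> P F \<Longrightarrow> F \<noteq> {} \<Longrightarrow> IF \<tau> F"
  unfolding S_rel_def S_rel_ne_def by auto

lemma compl_fst: "S_rel \<tau> P F \<Longrightarrow> P \<noteq> {} \<Longrightarrow> IP \<tau> P"
  unfolding S_rel_def S_rel_ne_def by auto

lemma point_props:
  assumes "full \<tau>" "S_property \<tau>"
  shows "IP \<tau> (Im \<tau> x)" "IF \<tau> (Ip \<tau> x)" "iemb \<tau> x \<in> c_completion \<tau>"
    "Im \<tau> x \<noteq> {}" "Ip \<tau> x \<noteq> {}"
proof -
  have S: "S_rel \<tau> (Im \<tau> x) (Ip \<tau> x)" using assms(2) unfolding S_property_def by blast
  have ne: "Im \<tau> x \<noteq> {}" "Ip \<tau> x \<noteq> {}" using assms(1) unfolding full_def by blast+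
  show "IP \<tau> (Im \<tau> x)" using compl_fst[OF S ne(1)] .
  show "IF \<tau> (Ip \<tau> x)" using compl_snd[OF S ne(2)] .
  show "iemb \<tau> x \<in> c_completion \<tau>" using S unfolding compl_mem iemb_def by simp
  show "Im \<tau> x \<noteq> {}" "Ip \<tau> x \<noteq> {}" by (fact ne)+
qed

lemma Im_bar_char:
  fixes \<tau> :: "'a::topological_space \<Rightarrow> 'a \<Rightarrow> ennreal"
  assumes T: "tri \<tau>" and Sp: "separable_lms \<tau>" and "full \<tau>" "S_property \<tau>"
  shows "b \<in> Im_bar \<tau> (iemb \<tau> y) \<longleftrightarrow> b \<in> c_completion \<tau> \<and> snd b \<inter> Im \<tau> y \<noteq> {}"
proof (cases "snd b = {}")
  case True then show ?thesis unfolding Im_bar_def tau_bar_def by simp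
next
  case False
  show ?thesis
  proof (cases "b \<in> c_completion \<tau>")
    case True
    then have "IF \<tau> (snd b)" using compl_snd False compl_mem by blast
    then show ?thesis using tau_bar_pos[OF T Sp False, of "iemb \<tau> y"] point_props[OF assms(3,4), of y] True
      unfolding Im_bar_def iemb_def by simp
  next
    case False then show ?thesis unfolding Im_bar_def by simp
  qed
qed

lemma Ip_bar_char:
  fixes \<tau> :: "'a::topological_space \<Rightarrow> 'a \<Rightarrow> ennreal"
  assumes T: "tri \<tau>" and Sp: "separable_lms \<tau>" and "full \<tau>" "S_property \<tau>"
  shows "b \<in> Ip_bar \<tau> (iemb \<tau> x) \<longleftrightarrow> b \<in> c_completion \<tau> \<and> Ip \<tau> x \<inter> fst b \<noteq> {}"
proof (cases "fst b = {}")
  case True then show ?thesis unfolding Ip_bar_def tau_bar_def by simp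
next
  case False
  show ?thesis
  proof (cases "b \<in> c_completion \<tau>")
    case True
    then have "IP \<tau> (fst b)" using compl_fst False compl_mem by blast
    then show ?thesis using tau_bar_pos[OF T Sp _ False, of "iemb \<tau> x"] point_props[OF assms(3,4), of x] True
      unfolding Ip_bar_def iemb_def by simp
  next
    case False then show ?thesis unfolding Ip_bar_def by simp
  qed
qed

lemma open_slices:
  fixes \<tau> :: "'a::topological_space \<Rightarrow> 'a \<Rightarrow> ennreal"
  assumes "lorentzian_metric_space \<tau>"
  shows "open {v. chr \<tau> w v}" "open {v. chr \<tau> v w}"
proof -
  have O: "open {p :: 'a \<times> 'a. 0 < \<tau> (fst p) (snd p)}"
    using assms unfolding lorentzian_metric_space_def lsc_tau_def by blast
  have "open ((\<lambda>v. (w, v)) -` {p :: 'a \<times> 'a. 0 < \<tau> (fst p) (snd p)})"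
    by (rule open_vimage[OF O]) (intro continuous_intros)
  then show "open {v. chr \<tau> w v}" unfolding chr_def by (simp add: vimage_def)
  have "open ((\<lambda>v. (v, w)) -` {p :: 'a \<times> 'a. 0 < \<tau> (fst p) (snd p)})"
    by (rule open_vimage[OF O]) (intro continuous_intros)
  then show "open {v. chr \<tau> v w}" unfolding chr_def by (simp add: vimage_def)
qed

theorem mainTheorem19:
  fixes \<tau> :: "'a::topological_space \<Rightarrow> 'a \<Rightarrow> ennreal" and x y :: 'a
  assumes "lorentzian_metric_space \<tau>"
    and "full \<tau>"
    and "separable_lms \<tau>"
    and "chron_dense \<tau>"
    and "S_property \<tau>"
  shows "leq_tau_bar \<tau> (iemb \<tau> x) (iemb \<tau> y) \<longleftrightarrow>
         y \<in> closure (Jp \<tau> x) \<and> x \<in> closure (Jm \<tau> y)"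
proof -
  have T: "tri \<tau>" using assms(1) unfolding lorentzian_metric_space_def tri_def by blast
  note Sp = assms(3)
  note Imc = Im_bar_char[OF T Sp assms(2,5)]
  note Ipc = Ip_bar_char[OF T Sp assms(2,5)]
  note pp = point_props[OF assms(2,5)]
  obtain S where S: "\<And>x y. chr \<tau> x y \<Longrightarrow> \<exists>s\<in>S. chr \<tau> x s \<and> chr \<tau> s y"
    using Sp unfolding separable_lms_def by blast
  show ?thesis
  proof
    assume L: "leq_tau_bar \<tau> (iemb \<tau> x) (iemb \<tau> y)"
    have "Im \<tau> x \<subseteq> Im \<tau> y"
    proof
      fix w assume "w \<in> Im \<tau> x"
      then obtain s where s: "chr \<tau> w s" "chr \<tau> s x" using S unfolding Im_def by blast
      have "s \<in> snd (iemb \<tau> w) \<inter> Im \<tau> x" using s unfolding iemb_def Ip_def Im_def by simp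
      then have "iemb \<tau> w \<in> Im_bar \<tau> (iemb \<tau> x)"
        using Imc[of "iemb \<tau> w" x] pp(3)[of w] by blast
      then have "iemb \<tau> w \<in> Im_bar \<tau> (iemb \<tau> y)" using L unfolding leq_tau_bar_def by blast
      then have "snd (iemb \<tau> w) \<inter> Im \<tau> y \<noteq> {}" using Imc[of "iemb \<tau> w" y] by blast
      then obtain t where "chr \<tau> w t" "chr \<tau> t y" unfolding iemb_def Ip_def Im_def by auto
      then show "w \<in> Im \<tau> y" using chr_trans[OF T] unfolding Im_def by blast
    qed
    moreover have "Ip \<tau> y \<subseteq> Ip \<tau> x"
    proof
      fix w assume "w \<in> Ip \<tau> y"
      then obtain s where s: "chr \<tau> y s" "chr \<tau> s w" using S unfolding Ip_def by blast
      have "s \<in> Ip \<tau> y \<inter> fst (iemb \<tau> w)" using s unfolding iemb_def Ip_def Im_def by simp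
      then have "iemb \<tau> w \<in> Ip_bar \<tau> (iemb \<tau> y)"
        using Ipc[of "iemb \<tau> w" y] pp(3)[of w] by blast
      then have "iemb \<tau> w \<in> Ip_bar \<tau> (iemb \<tau> x)" using L unfolding leq_tau_bar_def by blast
      then have "Ip \<tau> x \<inter> fst (iemb \<tau> w) \<noteq> {}" using Ipc[of "iemb \<tau> w" x] by blast
      then obtain t where "chr \<tau> x t" "chr \<tau> t w" unfolding iemb_def Ip_def Im_def by auto
      then show "w \<in> Ip \<tau> x" using chr_trans[OF T] unfolding Ip_def by blast
    qed
    ultimately have "leq_tau \<tau> x y" unfolding leq_tau_def by blast
    then have "y \<in> Jp \<tau> x" "x \<in> Jm \<tau> y" unfolding Jp_def Jm_def by simp_all
    then show "y \<in> closure (Jp \<tau> x) \<and> x \<in> closure (Jm \<tau> y)"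
      using closure_subset[of "Jp \<tau> x"] closure_subset[of "Jm \<tau> y"] by blast
  next
    assume R: "y \<in> closure (Jp \<tau> x) \<and> x \<in> closure (Jm \<tau> y)"
    have "Im_bar \<tau> (iemb \<tau> x) \<subseteq> Im_bar \<tau> (iemb \<tau> y)"
    proof
      fix b assume "b \<in> Im_bar \<tau> (iemb \<tau> x)"
      then obtain w where b: "b \<in> c_completion \<tau>" "w \<in> snd b" "chr \<tau> w x"
        using Imc unfolding Im_def by blast
      have "x \<in> {v. chr \<tau> w v} \<inter> closure (Jm \<tau> y)" using b R by blast
      then have "{v. chr \<tau> w v} \<inter> Jm \<tau> y \<noteq> {}"
        using open_Int_closure_eq_empty[OF open_slices(1)[OF assms(1)]] by blast
      then obtain v where "chr \<tau> w v" "leq_tau \<tau> v y" unfolding Jm_def by blast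
      then have "w \<in> Im \<tau> y" unfolding leq_tau_def Im_def by blast
      then show "b \<in> Im_bar \<tau> (iemb \<tau> y)" using Imc b by blast
    qed
    moreover have "Ip_bar \<tau> (iemb \<tau> y) \<subseteq> Ip_bar \<tau> (iemb \<tau> x)"
    proof
      fix b assume "b \<in> Ip_bar \<tau> (iemb \<tau> y)"
      then obtain w where b: "b \<in> c_completion \<tau>" "w \<in> fst b" "chr \<tau> y w"
        using Ipc unfolding Ip_def by blast
      have "y \<in> {v. chr \<tau> v w} \<inter> closure (Jp \<tau> x)" using b R by blast
      then have "{v. chr \<tau> v w} \<inter> Jp \<tau> x \<noteq> {}"
        using open_Int_closure_eq_empty[OF open_slices(2)[OF assms(1)]] by blast
      then obtain v where "chr \<tau> v w" "leq_tau \<tau> x v" unfolding Jp_def by blast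
      then have "w \<in> Ip \<tau> x" unfolding leq_tau_def Ip_def by blast
      then show "b \<in> Ip_bar \<tau> (iemb \<tau> x)" using Ipc b by blast
    qed
    ultimately show "leq_tau_bar \<tau> (iemb \<tau> x) (iemb \<tau> y)" unfolding leq_tau_bar_def by blast
  qed
qed

end
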